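(* Let $\mathfrak{g} = \mathfrak{X}(S^1)\ltimes Lb$ and let $\widehat{\mathfrak{g}} = \mathfrak{g}\oplus\mathbb{R}$ be its central extension by the 2-cocycle $c = \lambda_1 c_1 + \lambda_2 c_2 + \lambda_3 c_3$ (notation as in the context), where $\lambda_1,\lambda_2,\lambda_3\in\mathbb{R}$ satisfy $\frac{\lambda_1}{4} + \lambda_2 - 2\lambda_3 = 0$. Fix $a\in\mathbb{R}$ and define the linear functional $(\eta,a)\in\widehat{\mathfrak{g}}^*$ by $$\left\langle(\eta, a),\left(g\partial, \begin{pmatrix} x & y\\ 0 & -x\end{pmatrix}, t\right)\right\rangle = \int_{S^1} y\, d\theta + a t .$$ Let $\mathfrak{g}_{(\eta,a)} = \{X\in\mathfrak{g} : \langle(\eta,a),[(Y,0),(X,0)]_{\widehat{\mathfrak{g}}}\rangle = 0 \text{ for all } Y\in\mathfrak{g}\}$ be the stabiliser of $(\eta,a)$ under the coadjoint action, and let $\mathfrak{h} = Lb$, viewed as the ideal $\{(0,b): b\in Lb\}$ of $\mathfrak{g}$. Then $\mathfrak{g} = \mathfrak{g}_{(\eta,a)}\oplus\mathfrak{h}$ as vector spaces, i.e. $\mathfrak{g}_{(\eta,a)}\cap\mathfrak{h} = \{0\}$ and $\mathfrak{g}_{(\eta,a)}+\mathfrak{h} = \mathfrak{g}$.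
   Context: All functions are smooth and $2\pi$-periodic in $\theta$; $'$ denotes $d/d\theta$. $\mathfrak{X}(S^1) = \{f\partial : f\in C^\infty(S^1)\}$ with bracket $[f\partial, g\partial] = (fg' - f'g)\partial$. $Lb$ is the Lie algebra of smooth maps $S^1\to\left\{\begin{pmatrix} x & y\\ 0 & -x\end{pmatrix} : x,y\in\mathbb{R}\right\}$ with pointwise matrix commutator. The Lie algebra $\mathfrak{g} = \mathfrak{X}(S^1)\ltimes Lb$ and its central extension $\widehat{\mathfrak{g}} = \mathfrak{X}(S^1)\ltimes Lb\oplus\mathbb{R}$ have bracket $$[(f\partial, b, \delta_1), (g\partial, d, \delta_2)] = \big([f\partial, g\partial],\ [d, b] + f d' - g b',\ c((f\partial, b), (g\partial, d))\big),$$ where for $b_i = \begin{pmatrix} x_i & y_i\\ 0 & -x_i\end{pmatrix}$ the cocycles are $c_1((f_1\partial,b_1),(f_2\partial,b_2)) = \int_{S^1} x_1 x_2'\,d\theta$, $c_2((f_1\partial,b_1),(f_2\partial,b_2)) = \int_{S^1}(f_1'' x_2 - f_2'' x_1)\,d\theta$, $c_3((f_1\partial,b_1),(f_2\partial,b_2)) = \int_{S^1}(f_1'' f_2' - f_1' f_2'')\,d\theta$. *)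

theory Defs
  imports "HOL-Analysis.Analysis"
begin

definition smooth_per :: "(real \<Rightarrow> real) \<Rightarrow> bool" where
  "smooth_per f \<longleftrightarrow> (\<forall>n x. ((deriv ^^ n) f) differentiable (at x)) \<and> (\<forall>t. f (t + 2*pi) = f t)"

text \<open>An element (f, x, y) of g stands for (f d/dtheta, matrix [[x, y], [0, -x]]).\<close>
type_synonym gel = "(real \<Rightarrow> real) \<times> (real \<Rightarrow> real) \<times> (real \<Rightarrow> real)"

definition gcar :: "gel set" where
  "gcar = {(f, x, y). smooth_per f \<and> smooth_per x \<and> smooth_per y}"

definition gzero :: gel where
  "gzero = ((\<lambda>_. 0), (\<lambda>_. 0), (\<lambda>_. 0))"

definition gadd :: "gel \<Rightarrow> gel \<Rightarrow> gel" where
  "gadd u v = (\<lambda>t. fst u t + fst v t, \<lambda>t. fst (snd u) t + fst (snd v) t,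
               \<lambda>t. snd (snd u) t + snd (snd v) t)"

definition hcar :: "gel set" where
  "hcar = {(f, x, y). (\<forall>t. f t = 0) \<and> smooth_per x \<and> smooth_per y}"

definition S1int :: "(real \<Rightarrow> real) \<Rightarrow> real" where
  "S1int f = integral {0..2*pi} f"

text \<open>Bracket of g: [(f1,b1),(f2,b2)] = ([f1,f2], [b2,b1] + f1 b2' - f2 b1').
  For b_i = [[x_i,y_i],[0,-x_i]], [b2,b1] = b2 b1 - b1 b2 = [[0, 2(x2 y1 - x1 y2)],[0,0]].\<close>
definition gbracket :: "gel \<Rightarrow> gel \<Rightarrow> gel" where
  "gbracket u v = (case u of (f1, x1, y1) \<Rightarrow> case v of (f2, x2, y2) \<Rightarrow>
     (\<lambda>t. f1 t * deriv f2 t - deriv f1 t * f2 t,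
      \<lambda>t. f1 t * deriv x2 t - f2 t * deriv x1 t,
      \<lambda>t. 2 * (x2 t * y1 t - x1 t * y2 t) + f1 t * deriv y2 t - f2 t * deriv y1 t))"

definition cocycle1 :: "gel \<Rightarrow> gel \<Rightarrow> real" where
  "cocycle1 u v = (case u of (f1, x1, y1) \<Rightarrow> case v of (f2, x2, y2) \<Rightarrow>
     S1int (\<lambda>t. x1 t * deriv x2 t))"

definition cocycle2 :: "gel \<Rightarrow> gel \<Rightarrow> real" where
  "cocycle2 u v = (case u of (f1, x1, y1) \<Rightarrow> case v of (f2, x2, y2) \<Rightarrow>
     S1int (\<lambda>t. deriv (deriv f1) t * x2 t - deriv (deriv f2) t * x1 t))"

definition cocycle3 :: "gel \<Rightarrow> gel \<Rightarrow> real" where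
  "cocycle3 u v = (case u of (f1, x1, y1) \<Rightarrow> case v of (f2, x2, y2) \<Rightarrow>
     S1int (\<lambda>t. deriv (deriv f1) t * deriv f2 t - deriv f1 t * deriv (deriv f2) t))"

definition cocycle :: "real \<Rightarrow> real \<Rightarrow> real \<Rightarrow> gel \<Rightarrow> gel \<Rightarrow> real" where
  "cocycle l1 l2 l3 u v = l1 * cocycle1 u v + l2 * cocycle2 u v + l3 * cocycle3 u v"

definition ghat_bracket :: "real \<Rightarrow> real \<Rightarrow> real \<Rightarrow> gel \<times> real \<Rightarrow> gel \<times> real \<Rightarrow> gel \<times> real" where
  "ghat_bracket l1 l2 l3 U V = (gbracket (fst U) (fst V), cocycle l1 l2 l3 (fst U) (fst V))"

definition eta_pair :: "real \<Rightarrow> gel \<times> real \<Rightarrow> real" where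
  "eta_pair a U = S1int (snd (snd (fst U))) + a * snd U"

definition stabiliser :: "real \<Rightarrow> real \<Rightarrow> real \<Rightarrow> real \<Rightarrow> gel set" where
  "stabiliser l1 l2 l3 a = {X \<in> gcar. \<forall>Y \<in> gcar.
      eta_pair a (ghat_bracket l1 l2 l3 (Y, 0) (X, 0)) = 0}"

end

theory Submission
  imports Defs
begin

lemma sp_diff: "smooth_per f \<Longrightarrow> f differentiable (at t)"
  unfolding smooth_per_def by (metis funpow_0)

lemma sp_per: "smooth_per f \<Longrightarrow> f (t + 2*pi) = f t"
  unfolding smooth_per_def by blast

lemma sp_hasderiv: "smooth_per f \<Longrightarrow> (f has_real_derivative deriv f t) (at t)"
  using sp_diff DERIV_deriv_iff_real_differentiable by blast

lemma sp_cont: "smooth_per f \<Longrightarrow> continuous_on S f"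
  by (meson continuous_at_imp_continuous_on differentiable_imp_continuous_within sp_diff)

lemma sp_deriv: assumes "smooth_per f" shows "smooth_per (deriv f)"
proof -
  have 1: "\<forall>n x. ((deriv ^^ n) (deriv f)) differentiable (at x)"
  proof (intro allI)
    fix n x
    have "(deriv ^^ n) (deriv f) = (deriv ^^ Suc n) f" by (metis funpow_Suc_right comp_apply)
    then show "((deriv ^^ n) (deriv f)) differentiable (at x)"
      using assms unfolding smooth_per_def by metis
  qed
  have 2: "deriv f (t + 2*pi) = deriv f t" for t
  proof -
    have "(f has_real_derivative deriv f (t + 2*pi)) (at (t + 2*pi))"
      using sp_hasderiv[OF assms] .
    then have "((\<lambda>x. f (x + 2*pi)) has_real_derivative deriv f (t + 2*pi)) (at t)"
      using DERIV_shift by blast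
    moreover have "(\<lambda>x. f (x + 2*pi)) = f" using sp_per[OF assms] by auto
    ultimately have "(f has_real_derivative deriv f (t + 2*pi)) (at t)" by simp
    then show ?thesis using sp_hasderiv[OF assms] DERIV_unique by blast
  qed
  show ?thesis unfolding smooth_per_def using 1 2 by blast
qed

lemma deriv_cmult_fun:
  fixes h :: "real \<Rightarrow> real"
  assumes "\<And>t. h differentiable (at t)"
  shows "deriv (\<lambda>t. k * h t) = (\<lambda>t. k * deriv h t)"
proof
  fix t
  have "(h has_real_derivative deriv h t) (at t)"
    using assms DERIV_deriv_iff_real_differentiable by blast
  then have "((\<lambda>t. k * h t) has_real_derivative k * deriv h t) (at t)"
    by (auto intro!: derivative_eq_intros)
  then show "deriv (\<lambda>t. k * h t) t = k * deriv h t" by (rule DERIV_imp_deriv)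
qed

lemma deriv_add_fun:
  fixes h g :: "real \<Rightarrow> real"
  assumes "\<And>t. h differentiable (at t)" "\<And>t. g differentiable (at t)"
  shows "deriv (\<lambda>t. h t + g t) = (\<lambda>t. deriv h t + deriv g t)"
proof
  fix t
  have "(h has_real_derivative deriv h t) (at t)" "(g has_real_derivative deriv g t) (at t)"
    using assms DERIV_deriv_iff_real_differentiable by blast+
  then have "((\<lambda>t. h t + g t) has_real_derivative deriv h t + deriv g t) (at t)"
    by (auto intro!: derivative_eq_intros)
  then show "deriv (\<lambda>t. h t + g t) t = deriv h t + deriv g t" by (rule DERIV_imp_deriv)
qed

lemma sp_cmult: assumes "smooth_per h" shows "smooth_per (\<lambda>t. k * h t)"
proof -
  have e: "(deriv ^^ n) (\<lambda>t. k * h t) = (\<lambda>t. k * (deriv ^^ n) h t)" for n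
  proof (induction n)
    case 0 then show ?case by simp
  next
    case (Suc n)
    have "\<And>t. (deriv ^^ n) h differentiable (at t)" using assms unfolding smooth_per_def by blast
    then show ?case using Suc by (simp add: deriv_cmult_fun)
  qed
  have "\<And>n x. ((deriv ^^ n) h) differentiable (at x)" using assms unfolding smooth_per_def by blast
  then have "\<forall>n x. ((deriv ^^ n) (\<lambda>t. k * h t)) differentiable (at x)"
    unfolding e by (auto intro!: derivative_intros)
  then show ?thesis using assms unfolding smooth_per_def by simp
qed

lemma sp_add: assumes "smooth_per h" "smooth_per g" shows "smooth_per (\<lambda>t. h t + g t)"
proof -
  have e: "(deriv ^^ n) (\<lambda>t. h t + g t) = (\<lambda>t. (deriv ^^ n) h t + (deriv ^^ n) g t)" for n
  proof (induction n)
    case 0 then show ?case by simp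
  next
    case (Suc n)
    have "\<And>t. (deriv ^^ n) h differentiable (at t)" "\<And>t. (deriv ^^ n) g differentiable (at t)"
      using assms unfolding smooth_per_def by blast+
    then show ?case using Suc by (simp add: deriv_add_fun)
  qed
  have "\<And>n x. ((deriv ^^ n) h) differentiable (at x)" "\<And>n x. ((deriv ^^ n) g) differentiable (at x)"
    using assms unfolding smooth_per_def by blast+
  then have "\<forall>n x. ((deriv ^^ n) (\<lambda>t. h t + g t)) differentiable (at x)"
    unfolding e by (auto intro!: derivative_intros)
  then show ?thesis using assms unfolding smooth_per_def by simp
qed

lemma sp_zero: "smooth_per (\<lambda>_. 0)"
proof -
  have e: "(deriv ^^ n) (\<lambda>_::real. 0::real) = (\<lambda>_. 0)" for n
    by (induction n) auto
  show ?thesis unfolding smooth_per_def e by simp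
qed

lemma periodic_all:
  assumes "\<And>t. h (t + 2*pi) = (h t :: real)" "\<And>t. t \<in> {0..2*pi} \<Longrightarrow> h t = 0"
  shows "h t = 0"
proof -
  have p: "h (s + real_of_int k * (2*pi)) = h s" for s k
  proof (induction k rule: int_induct[where k=0])
    case base then show ?case by simp
  next
    case (step1 i)
    have "h (s + real_of_int (i+1) * (2*pi)) = h ((s + real_of_int i * (2*pi)) + 2*pi)"
      by (simp add: algebra_simps)
    then show ?case using step1 assms(1) by simp
  next
    case (step2 i)
    have "h (s + real_of_int i * (2*pi)) = h ((s + real_of_int (i - 1) * (2*pi)) + 2*pi)"
      by (simp add: algebra_simps)
    then show ?case using step2 assms(1) by simp
  qed
  define k where "k = floor (t / (2*pi))"
  define s where "s = t - real_of_int k * (2*pi)"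
  have "real_of_int k \<le> t / (2*pi)" "t / (2*pi) < real_of_int k + 1"
    unfolding k_def by linarith+
  then have "real_of_int k * (2*pi) \<le> t" "t < (real_of_int k + 1) * (2*pi)"
    by (simp_all add: field_simps)
  then have "s \<in> {0..2*pi}" unfolding s_def by (auto simp: algebra_simps)
  then have "h s = 0" using assms(2) by blast
  moreover have "t = s + real_of_int k * (2*pi)" unfolding s_def by simp
  ultimately show ?thesis using p by metis
qed


lemma zero_in_stab: "gzero \<in> stabiliser l1 l2 l3 a"
  unfolding stabiliser_def gzero_def gcar_def
  by (auto simp: sp_zero eta_pair_def ghat_bracket_def gbracket_def cocycle_def cocycle1_def
      cocycle2_def cocycle3_def S1int_def)

lemma zero_from_int:
  fixes x :: "real \<Rightarrow> real"
  assumes "smooth_per x" "S1int (\<lambda>t. c * (x t * x t)) = 0" "c \<noteq> 0"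
  shows "x = (\<lambda>_. 0)"
proof -
  have cont: "continuous_on {0..2*pi} (\<lambda>t. x t * x t)"
    using sp_cont[OF assms(1)] by (auto intro!: continuous_intros)
  have "S1int (\<lambda>t. c * (x t * x t)) = c * integral {0..2*pi} (\<lambda>t. x t * x t)"
    unfolding S1int_def by simp
  then have "integral {0..2*pi} (\<lambda>t. x t * x t) = 0" using assms by simp
  then have hi: "((\<lambda>t. x t * x t) has_integral 0) (cbox 0 (2*pi))"
    using integrable_continuous_real[OF cont] by (metis box_real(2) integrable_integral)
  have "x t * x t = 0" if "t \<in> {0..2*pi}" for t
    using has_integral_0_cbox_imp_0[OF _ _ hi, of t] cont that pi_gt_zero by force
  then have "x t = 0" if "t \<in> {0..2*pi}" for t using that by simp
  then show ?thesis using periodic_all[of x] sp_per[OF assms(1)] by blast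
qed

lemma part1: "stabiliser l1 l2 l3 a \<inter> hcar = {gzero}"
proof
  show "{gzero} \<subseteq> stabiliser l1 l2 l3 a \<inter> hcar"
    using zero_in_stab sp_zero by (auto simp: hcar_def gzero_def)
next
  show "stabiliser l1 l2 l3 a \<inter> hcar \<subseteq> {gzero}"
  proof
    fix X assume X: "X \<in> stabiliser l1 l2 l3 a \<inter> hcar"
    obtain f x y where Xe: "X = (f, x, y)" by (cases X) auto
    have f0: "f = (\<lambda>_. 0)" using X Xe by (auto simp: hcar_def)
    have sx: "smooth_per x" and sy: "smooth_per y" using X Xe by (auto simp: hcar_def)
    have st: "\<forall>Y \<in> gcar. eta_pair a (ghat_bracket l1 l2 l3 (Y, 0) (X, 0)) = 0"
      using X unfolding stabiliser_def by blast
    have "((\<lambda>_. 0), (\<lambda>_. 0), x) \<in> gcar" using sx sp_zero by (auto simp: gcar_def)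
    from st[rule_format, OF this] have "S1int (\<lambda>t. 2 * (x t * x t)) = 0"
      unfolding Xe f0
      by (simp add: eta_pair_def ghat_bracket_def gbracket_def cocycle_def cocycle1_def
      cocycle2_def cocycle3_def S1int_def)
    then have x0: "x = (\<lambda>_. 0)" using zero_from_int[OF sx] by simp
    have "((\<lambda>_. 0), y, (\<lambda>_. 0)) \<in> gcar" using sy sp_zero by (auto simp: gcar_def)
    from st[rule_format, OF this] have "S1int (\<lambda>t. (-2) * (y t * y t)) = 0"
      unfolding Xe f0 x0
      by (simp add: eta_pair_def ghat_bracket_def gbracket_def cocycle_def cocycle1_def
      cocycle2_def cocycle3_def S1int_def)
    then have y0: "y = (\<lambda>_. 0)" using zero_from_int[OF sy, of "-2"] by simp
    show "X \<in> {gzero}" unfolding Xe f0 x0 y0 gzero_def by simp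
  qed
qed


lemma hi_cont: "continuous_on {0..2*pi} h \<Longrightarrow> (h has_integral S1int h) {0..2*pi}"
  unfolding S1int_def using integrable_continuous_real integrable_integral by blast

lemma stab_mem:
  fixes l1 l2 l3 a :: real
  assumes hyp: "l1 / 4 + l2 - 2 * l3 = 0" and sf: "smooth_per f"
  defines "c \<equiv> a * (l2 / 2 - 2 * l3)"
  shows "(f, (\<lambda>t. (-1/2) * deriv f t), (\<lambda>t. c * deriv (deriv f) t)) \<in> stabiliser l1 l2 l3 a"
proof -
  have sf1: "smooth_per (deriv f)" using sp_deriv[OF sf] .
  have sf2: "smooth_per (deriv (deriv f))" using sp_deriv[OF sf1] .
  have sf3: "smooth_per (deriv (deriv (deriv f)))" using sp_deriv[OF sf2] .
  have dx: "deriv (\<lambda>t. (-1/2) * deriv f t) = (\<lambda>t. (-1/2) * deriv (deriv f) t)"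
    using deriv_cmult_fun sp_diff[OF sf1] by blast
  have dy: "deriv (\<lambda>t. c * deriv (deriv f) t) = (\<lambda>t. c * deriv (deriv (deriv f)) t)"
    using deriv_cmult_fun sp_diff[OF sf2] by blast
  have inG: "(f, (\<lambda>t. (-1/2) * deriv f t), (\<lambda>t. c * deriv (deriv f) t)) \<in> gcar"
    unfolding gcar_def using sf sp_cmult[OF sf1, of "-1/2"] sp_cmult[OF sf2, of c]
    by (simp only: mem_Collect_eq prod.case)
  have "eta_pair a (ghat_bracket l1 l2 l3 (Y, 0) ((f, (\<lambda>t. (-1/2) * deriv f t), (\<lambda>t. c * deriv (deriv f) t)), 0)) = 0"
    if Y: "Y \<in> gcar" for Y
  proof -
    obtain g u v where Ye: "Y = (g, u, v)" by (cases Y) auto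
    have sg: "smooth_per g" and su: "smooth_per u" and sv: "smooth_per v"
      using Y Ye by (auto simp: gcar_def)
    have sg1: "smooth_per (deriv g)" using sp_deriv[OF sg] .
    have sg2: "smooth_per (deriv (deriv g))" using sp_deriv[OF sg1] .
    have sv1: "smooth_per (deriv v)" using sp_deriv[OF sv] .
    define T3 where "T3 = (\<lambda>t. 2 * ((-1/2) * deriv f t * v t - u t * (c * deriv (deriv f) t))
       + g t * (c * deriv (deriv (deriv f)) t) - f t * deriv v t)"
    define C1 where "C1 = (\<lambda>t. u t * ((-1/2) * deriv (deriv f) t))"
    define C2 where "C2 = (\<lambda>t. deriv (deriv g) t * ((-1/2) * deriv f t) - deriv (deriv f) t * u t)"
    define C3 where "C3 = (\<lambda>t. deriv (deriv g) t * deriv f t - deriv g t * deriv (deriv f) t)"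
    have eq: "eta_pair a (ghat_bracket l1 l2 l3 (Y, 0) ((f, (\<lambda>t. (-1/2) * deriv f t), (\<lambda>t. c * deriv (deriv f) t)), 0))
      = S1int T3 + a * (l1 * S1int C1 + l2 * S1int C2 + l3 * S1int C3)"
      unfolding Ye eta_pair_def ghat_bracket_def gbracket_def cocycle_def cocycle1_def
        cocycle2_def cocycle3_def T3_def C1_def C2_def C3_def prod.case fst_conv snd_conv dx dy
      by simp
    have cs: "continuous_on {0..2*pi} f" "continuous_on {0..2*pi} (deriv f)"
      "continuous_on {0..2*pi} (deriv (deriv f))" "continuous_on {0..2*pi} (deriv (deriv (deriv f)))"
      "continuous_on {0..2*pi} g" "continuous_on {0..2*pi} (deriv g)"
      "continuous_on {0..2*pi} (deriv (deriv g))" "continuous_on {0..2*pi} u"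
      "continuous_on {0..2*pi} v" "continuous_on {0..2*pi} (deriv v)"
      using sp_cont sf sf1 sf2 sf3 sg sg1 sg2 su sv sv1 by blast+
    have "continuous_on {0..2*pi} T3" "continuous_on {0..2*pi} C1"
      "continuous_on {0..2*pi} C2" "continuous_on {0..2*pi} C3"
      unfolding T3_def C1_def C2_def C3_def using cs by (auto intro!: continuous_intros)
    then have I1: "((\<lambda>t. T3 t + a * (l1 * C1 t + l2 * C2 t + l3 * C3 t)) has_integral
        (S1int T3 + a * (l1 * S1int C1 + l2 * S1int C2 + l3 * S1int C3))) {0..2*pi}"
      by (intro has_integral_add has_integral_mult_right hi_cont) auto
    define F where "F = (\<lambda>t. - (f t * v t) + a * ((l2/2) * (g t * deriv (deriv f) t - deriv g t * deriv f t)
       + l3 * (deriv g t * deriv f t - 2 * (g t * deriv (deriv f) t))))"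
    have l1e: "l1 = 4 * (2 * l3 - l2)" using hyp by simp
    have dF: "(F has_real_derivative (T3 t + a * (l1 * C1 t + l2 * C2 t + l3 * C3 t))) (at t)" for t
    proof -
      note d = sp_hasderiv[OF sf, of t] sp_hasderiv[OF sf1, of t] sp_hasderiv[OF sf2, of t]
        sp_hasderiv[OF sg, of t] sp_hasderiv[OF sg1, of t] sp_hasderiv[OF sv, of t]
      show ?thesis unfolding F_def T3_def C1_def C2_def C3_def c_def l1e
        apply (auto intro!: derivative_eq_intros d simp: algebra_simps)
        apply (simp add: field_simps)
        done
    qed
    have I2: "((\<lambda>t. T3 t + a * (l1 * C1 t + l2 * C2 t + l3 * C3 t)) has_integral (F (2*pi) - F 0)) {0..2*pi}"
      apply (rule fundamental_theorem_of_calculus)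
      using dF by (auto simp: has_real_derivative_iff_has_vector_derivative intro: has_vector_derivative_at_within)
    have "F (0 + 2*pi) = F 0"
      unfolding F_def using sp_per sf sf1 sf2 sg sg1 sv by metis
    then have "F (2*pi) - F 0 = 0" by simp
    then show ?thesis using eq I1 I2 has_integral_unique by metis
  qed
  then show ?thesis using inG unfolding stabiliser_def by blast
qed


lemma stab_sub: "stabiliser l1 l2 l3 a \<subseteq> gcar"
  unfolding stabiliser_def by blast

theorem mainTheorem1:
  fixes l1 l2 l3 a :: real
  assumes "l1 / 4 + l2 - 2 * l3 = 0"
  shows "stabiliser l1 l2 l3 a \<inter> hcar = {gzero}
    \<and> {gadd X H | X H. X \<in> stabiliser l1 l2 l3 a \<and> H \<in> hcar} = gcar"
proof
  show "stabiliser l1 l2 l3 a \<inter> hcar = {gzero}" by (rule part1)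
next
  show "{gadd X H | X H. X \<in> stabiliser l1 l2 l3 a \<and> H \<in> hcar} = gcar"
  proof
    show "{gadd X H | X H. X \<in> stabiliser l1 l2 l3 a \<and> H \<in> hcar} \<subseteq> gcar"
    proof
      fix Z assume "Z \<in> {gadd X H | X H. X \<in> stabiliser l1 l2 l3 a \<and> H \<in> hcar}"
      then obtain X H where X: "X \<in> stabiliser l1 l2 l3 a" and H: "H \<in> hcar" and ZXH: "Z = gadd X H"
        by blast
      obtain f x y where Xe: "X = (f, x, y)" by (cases X) auto
      obtain h p q where He: "H = (h, p, q)" by (cases H) auto
      have h0: "h = (\<lambda>_. 0)" using H He by (auto simp: hcar_def)
      have "X \<in> gcar" using X stab_sub by blast
      then have "smooth_per f" "smooth_per x" "smooth_per y" using Xe by (auto simp: gcar_def)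
      moreover have "smooth_per p" "smooth_per q" using H He by (auto simp: hcar_def)
      ultimately show "Z \<in> gcar"
        unfolding ZXH Xe He h0 gadd_def gcar_def using sp_add sp_zero by simp
    qed
  next
    show "gcar \<subseteq> {gadd X H | X H. X \<in> stabiliser l1 l2 l3 a \<and> H \<in> hcar}"
    proof
      fix Z assume Z: "Z \<in> gcar"
      obtain f x y where Ze: "Z = (f, x, y)" by (cases Z) auto
      have sf: "smooth_per f" and sx: "smooth_per x" and sy: "smooth_per y"
        using Z Ze by (auto simp: gcar_def)
      define c where "c = a * (l2 / 2 - 2 * l3)"
      define X where "X = (f, (\<lambda>t. (-1/2) * deriv f t), (\<lambda>t. c * deriv (deriv f) t))"
      define H where "H = ((\<lambda>_::real. 0::real), (\<lambda>t. x t + (1/2) * deriv f t),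
          (\<lambda>t. y t + (-c) * deriv (deriv f) t))"
      have "X \<in> stabiliser l1 l2 l3 a" unfolding X_def c_def using stab_mem[OF assms sf] by simp
      moreover have "H \<in> hcar"
      proof -
        have s1: "smooth_per (deriv f)" using sp_deriv[OF sf] .
        have s2: "smooth_per (deriv (deriv f))" using sp_deriv[OF s1] .
        have "smooth_per (\<lambda>t. x t + (1/2) * deriv f t)"
          using sp_add[OF sx sp_cmult[OF s1]] .
        moreover have "smooth_per (\<lambda>t. y t + (-c) * deriv (deriv f) t)"
          using sp_add[OF sy sp_cmult[OF s2]] .
        ultimately show ?thesis unfolding H_def hcar_def by simp
      qed
      moreover have "gadd X H = Z" unfolding Ze X_def H_def gadd_def by auto
      ultimately show "Z \<in> {gadd X H | X H. X \<in> stabiliser l1 l2 l3 a \<and> H \<in> hcar}" by blast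
    qed
  qed
qed

end
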